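(* For every integer $n\ge2$, the roots of $Q_n(x)$ are \[ x_{n,k}=-\frac{5+\tan^2\frac{(2k-1)\pi}{2n}}{4},\qquad k=1,2,\dots,\lfloor n/2\rfloor . \]
   Context: For $n\ge1$ let $\Xi_n$ be the poset on $\{x_1,\dots,x_n\}$ whose cover relations are exactly: $x_2\prec x_1$, $x_3\prec x_2$, and for $3\le i\le n-1$, $x_i\prec x_{i+1}$ if $i$ is odd and $x_{i+1}\prec x_i$ if $i$ is even (so $x_1>x_2>x_3<x_4>x_5<\cdots$). A filter of a poset is an up-closed subset. The matchable Lucas cube $\Omega_n$ is the graph whose vertices are the filters of $\Xi_n$, two filters adjacent iff one is obtained from the other by deleting a single element. $q_{n,k}$ denotes the number of induced subgraphs of $\Omega_n$ isomorphic to the $k$-dimensional hypercube, and $Q_n(x)=\sum_{k\ge0}q_{n,k}x^k$ is the cube polynomial of $\Omega_n$. *)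

theory Defs
  imports Complex_Main "HOL-Computational_Algebra.Polynomial"
begin

text \<open>The poset Xi_n on {x_1,...,x_n}; element x_i is represented by the natural number i.
  xi_cover n i j means that x_i is covered by x_j (x_i < x_j is a cover relation).\<close>
definition xi_cover :: "nat \<Rightarrow> nat \<Rightarrow> nat \<Rightarrow> bool" where
  "xi_cover n i j \<longleftrightarrow> i \<in> {1..n} \<and> j \<in> {1..n} \<and>
     ((i = 2 \<and> j = 1) \<or> (i = 3 \<and> j = 2) \<or>
      (\<exists>m. 3 \<le> m \<and> m \<le> n - 1 \<and>
          ((odd m \<and> i = m \<and> j = m + 1) \<or> (even m \<and> i = m + 1 \<and> j = m))))"

definition xi_le :: "nat \<Rightarrow> nat \<Rightarrow> nat \<Rightarrow> bool" where
  "xi_le n = (xi_cover n)\<^sup>*\<^sup>*"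

definition xi_filters :: "nat \<Rightarrow> nat set set" where
  "xi_filters n = {F. F \<subseteq> {1..n} \<and> (\<forall>i j. i \<in> F \<longrightarrow> j \<in> {1..n} \<longrightarrow> xi_le n i j \<longrightarrow> j \<in> F)}"

definition omega_adj :: "nat set \<Rightarrow> nat set \<Rightarrow> bool" where
  "omega_adj F G \<longleftrightarrow> (\<exists>a\<in>F. G = F - {a}) \<or> (\<exists>a\<in>G. F = G - {a})"

definition hypercube_adj :: "nat set \<Rightarrow> nat set \<Rightarrow> bool" where
  "hypercube_adj A B \<longleftrightarrow> card ((A - B) \<union> (B - A)) = 1"

definition induces_cube :: "'a set \<Rightarrow> ('a \<Rightarrow> 'a \<Rightarrow> bool) \<Rightarrow> nat \<Rightarrow> 'a set \<Rightarrow> bool" where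
  "induces_cube V E k S \<longleftrightarrow> S \<subseteq> V \<and>
     (\<exists>f. bij_betw f (Pow {..<k}) S \<and>
          (\<forall>A\<in>Pow {..<k}. \<forall>B\<in>Pow {..<k}. E (f A) (f B) \<longleftrightarrow> hypercube_adj A B))"

definition q :: "nat \<Rightarrow> nat \<Rightarrow> nat" where
  "q n k = card {S. induces_cube (xi_filters n) omega_adj k S}"

text \<open>Cube polynomial Q_n(x) = sum_k q_{n,k} x^k.  The sum may be truncated at k = n since
  an induced k-cube has 2^k vertices, all subsets of {1..n}, so q n k = 0 for k > n.\<close>
definition cube_poly :: "nat \<Rightarrow> 'a::comm_semiring_1 poly" where
  "cube_poly n = (\<Sum>k\<le>n. monom (of_nat (q n k)) k)"

end

theory Submission
  imports Defs
begin

definition sd :: "'a set \<Rightarrow> 'a set \<Rightarrow> 'a set" where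
  "sd A B = (A - B) \<union> (B - A)"

lemma sd_assoc: "sd (sd A B) C = sd A (sd B C)" unfolding sd_def by blast
lemma sd_self[simp]: "sd A A = {}" unfolding sd_def by blast
lemma sd_empty[simp]: "sd A {} = A" "sd {} A = A" unfolding sd_def by blast+
lemma sd_comm: "sd A B = sd B A" unfolding sd_def by blast
lemma sd_cancel: "sd A B = sd A C \<longleftrightarrow> B = C" unfolding sd_def by blast

lemma hyp_sd: "hypercube_adj A B \<longleftrightarrow> (\<exists>a. sd A B = {a})"
  unfolding hypercube_adj_def sd_def by (simp add: card_1_singleton_iff)

lemma omega_hyp: "omega_adj = hypercube_adj"
proof (intro ext)
  fix F G :: "nat set"
  show "omega_adj F G = hypercube_adj F G"
    unfolding omega_adj_def hyp_sd sd_def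
  proof
    assume "(\<exists>a\<in>F. G = F - {a}) \<or> (\<exists>a\<in>G. F = G - {a})"
    then show "\<exists>a. F - G \<union> (G - F) = {a}" by blast
  next
    assume "\<exists>a. F - G \<union> (G - F) = {a}"
    then obtain a where a: "F - G \<union> (G - F) = {a}" by blast
    have ax: "\<And>x. ((x \<in> F \<and> x \<notin> G) \<or> (x \<in> G \<and> x \<notin> F)) \<longleftrightarrow> x = a"
      using a by (simp add: set_eq_iff)
    show "(\<exists>a\<in>F. G = F - {a}) \<or> (\<exists>a\<in>G. F = G - {a})"
    proof (cases "a \<in> F")
      case True
      have "G = F - {a}"
      proof (rule set_eqI)
        fix x show "x \<in> G \<longleftrightarrow> x \<in> F - {a}" using ax[of x] ax[of a] True by blast
      qed
      then show ?thesis using True by blast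
    next
      case False
      have aG: "a \<in> G" using ax[of a] False by blast
      have "F = G - {a}"
      proof (rule set_eqI)
        fix x show "x \<in> F \<longleftrightarrow> x \<in> G - {a}" using ax[of x] ax[of a] False by blast
      qed
      then show ?thesis using aG by blast
    qed
  qed
qed

lemma cube_shape:
  assumes bij: "bij_betw f (Pow {..<k}) S"
    and adj: "\<forall>A\<in>Pow {..<k}. \<forall>B\<in>Pow {..<k}. hypercube_adj (f A) (f B) \<longleftrightarrow> hypercube_adj A B"
  shows "\<exists>d. inj_on d {..<k} \<and> (\<forall>X. X \<subseteq> {..<k} \<longrightarrow> f X = sd (f {}) (d ` X))"
proof -
  have injf: "inj_on f (Pow {..<k})" using bij by (simp add: bij_betw_imp_inj_on)
  have adj2: "\<exists>a. sd (f A) (f B) = {a}" if "A \<subseteq> {..<k}" "B \<subseteq> {..<k}" "\<exists>a. sd A B = {a}" for A B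
    using adj that by (simp add: hyp_sd)
  have "\<forall>i\<in>{..<k}. \<exists>a. sd (f {i}) (f {}) = {a}"
  proof
    fix i assume "i \<in> {..<k}"
    then show "\<exists>a. sd (f {i}) (f {}) = {a}"
      by (intro adj2) (auto simp: sd_def)
  qed
  then obtain d where d: "\<And>i. i \<in> {..<k} \<Longrightarrow> sd (f {i}) (f {}) = {d i}" by metis
  have fi: "f {i} = sd (f {}) {d i}" if "i \<in> {..<k}" for i
    using d[OF that] by (metis sd_assoc sd_comm sd_empty(1) sd_self)
  have injd: "inj_on d {..<k}"
  proof (rule inj_onI)
    fix i j assume ij: "i \<in> {..<k}" "j \<in> {..<k}" "d i = d j"
    then have "f {i} = f {j}" using fi by simp
    then have "{i} = {j}" using injf ij unfolding inj_on_def by blast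
    then show "i = j" by simp
  qed
  have main: "f X = sd (f {}) (d ` X)" if "X \<subseteq> {..<k}" for X
    using that
  proof (induction "card X" arbitrary: X rule: less_induct)
    case less
    have finX: "finite X" using less.prems finite_subset by blast
    show ?case
    proof (cases "card X \<le> 1")
      case True
      then consider "card X = 0" | "card X = 1" by linarith
      then show ?thesis
      proof cases
        case 1
        then have "X = {}" using finX by simp
        then show ?thesis by simp
      next
        case 2
        then obtain i where "X = {i}" using card_1_singleton_iff by (metis One_nat_def)
        then show ?thesis using fi less.prems by auto
      qed
    next
      case False
      then have "2 \<le> card X" by simp
      then obtain i where i: "i \<in> X" by fastforce
      have "card (X - {i}) \<ge> 1" using i finX \<open>2 \<le> card X\<close> by simp
      then have "X - {i} \<noteq> {}" by (metis card.empty not_one_le_zero)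
      then obtain j where "j \<in> X - {i}" by blast
      then have ij: "i \<in> X" "j \<in> X" "i \<noteq> j" using i by auto
      define Z where "Z = X - {i, j}"
      have cXi: "card (X - {i}) < card X" by (rule card_Diff1_less[OF finX ij(1)])
      have cXj: "card (X - {j}) < card X" by (rule card_Diff1_less[OF finX ij(2)])
      have cZ: "card Z < card X" unfolding Z_def using finX ij
        by (intro psubset_card_mono) auto
      have IHi: "f (X - {i}) = sd (f {}) (d ` (X - {i}))"
        using less.hyps[OF cXi] less.prems by blast
      have IHj: "f (X - {j}) = sd (f {}) (d ` (X - {j}))"
        using less.hyps[OF cXj] less.prems by blast
      have IHZ: "f Z = sd (f {}) (d ` Z)"
        using less.hyps[OF cZ] less.prems unfolding Z_def by blast
      have injX: "inj_on d X" using injd less.prems inj_on_subset by blast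
      define D where "D = d ` X"
      have Di: "d ` (X - {i}) = D - {d i}" unfolding D_def using injX ij
        by (simp add: inj_on_image_set_diff)
      have Dj: "d ` (X - {j}) = D - {d j}" unfolding D_def using injX ij
        by (simp add: inj_on_image_set_diff)
      have DZ: "d ` Z = D - {d i, d j}" unfolding D_def Z_def using injX ij
        by (simp add: inj_on_image_set_diff)
      have dij: "d i \<noteq> d j" using injX ij unfolding inj_on_def by blast
      have diD: "d i \<in> D" "d j \<in> D" unfolding D_def using ij by auto
      obtain a where a: "sd (f X) (f (X - {j})) = {a}"
        using adj2[of X "X - {j}"] less.prems ij by (auto simp: sd_def)
      obtain b where b: "sd (f X) (f (X - {i})) = {b}"
        using adj2[of X "X - {i}"] less.prems ij by (auto simp: sd_def)
      have fXa: "f X = sd (f {}) (sd (D - {d j}) {a})"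
        using a IHj Dj by (metis sd_assoc sd_comm sd_empty(1) sd_self)
      have fXb: "f X = sd (f {}) (sd (D - {d i}) {b})"
        using b IHi Di by (metis sd_assoc sd_comm sd_empty(1) sd_self)
      have eq: "sd (D - {d j}) {a} = sd (D - {d i}) {b}"
        using fXa fXb sd_cancel by metis
      show ?thesis
      proof (cases "a = d j")
        case True
        then have "sd (D - {d j}) {a} = D" using diD unfolding sd_def by blast
        then show ?thesis using fXa D_def by simp
      next
        case False
        then have "d j \<notin> sd (D - {d j}) {a}" unfolding sd_def by blast
        then have "b = d j" using eq diD dij unfolding sd_def by blast
        then have "d i \<notin> sd (D - {d i}) {b}" using dij unfolding sd_def by blast
        then have "a = d i" using eq diD dij unfolding sd_def by blast
        then have "sd (D - {d j}) {a} = D - {d i, d j}" using diD dij unfolding sd_def by auto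
        then have "f X = f Z" using fXa IHZ DZ by simp
        moreover have "X \<noteq> Z" using ij unfolding Z_def by blast
        moreover have "Z \<subseteq> {..<k}" using less.prems unfolding Z_def by blast
        ultimately have False using injf less.prems unfolding inj_on_def by blast
        then show ?thesis ..
      qed
    qed
  qed
  show ?thesis using injd main by blast
qed


definition Ms :: "nat set set \<Rightarrow> nat set \<Rightarrow> nat set" where
  "Ms V L = {a. a \<notin> L \<and> insert a L \<in> V}"

definition cubeset :: "nat set \<Rightarrow> nat set \<Rightarrow> nat set set" where
  "cubeset L A = {L \<union> B | B. B \<subseteq> A}"

lemma union_closed_sub:
  assumes uc: "\<forall>F\<in>V. \<forall>G\<in>V. F \<union> G \<in> V" and L: "L \<in> V"
    and A: "A \<subseteq> Ms V L" and B: "B \<subseteq> A" and fin: "finite B"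
  shows "L \<union> B \<in> V"
  using fin B
proof (induction B rule: finite_induct)
  case empty
  then show ?case using L by simp
next
  case (insert b B)
  have "insert b L \<in> V" using insert.prems A unfolding Ms_def by blast
  moreover have "L \<union> B \<in> V" using insert by blast
  ultimately have "insert b L \<union> (L \<union> B) \<in> V" using uc by blast
  moreover have "insert b L \<union> (L \<union> B) = L \<union> insert b B" by blast
  ultimately show ?case by simp
qed

lemma cubeset_inj:
  assumes "L \<inter> A = {}" "L' \<inter> A' = {}" "cubeset L A = cubeset L' A'"
  shows "L = L' \<and> A = A'"
proof -
  have "L \<in> cubeset L' A'" using assms(3) unfolding cubeset_def by blast
  then have 1: "L' \<subseteq> L" unfolding cubeset_def by blast
  have "L' \<in> cubeset L A" using assms(3) unfolding cubeset_def by blast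
  then have 2: "L \<subseteq> L'" unfolding cubeset_def by blast
  have U: "\<Union>(cubeset L A) = L \<union> A" for L A unfolding cubeset_def by blast
  have "L \<union> A = L' \<union> A'" using U[of L A] U[of L' A'] assms(3) by simp
  then show ?thesis using 1 2 assms(1,2) by blast
qed

lemma cube_from_pair:
  assumes uc: "\<forall>F\<in>V. \<forall>G\<in>V. F \<union> G \<in> V" and L: "L \<in> V"
    and A: "A \<subseteq> Ms V L" and finA: "finite A" and cA: "card A = k"
  shows "induces_cube V hypercube_adj k (cubeset L A)"
proof -
  have LA: "L \<inter> A = {}" using A unfolding Ms_def by blast
  have sub: "cubeset L A \<subseteq> V" unfolding cubeset_def
    using union_closed_sub[OF uc L A] finA finite_subset by blast
  obtain g where g: "bij_betw g {..<k} A"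
    using bij_betw_iff_card[of "{..<k}" A] finA cA by auto
  have injg: "inj_on g {..<k}" and gim: "g ` {..<k} = A"
    using g by (simp_all add: bij_betw_imp_inj_on bij_betw_imp_surj_on)
  define f where "f X = L \<union> g ` X" for X
  have bijf: "bij_betw f (Pow {..<k}) (cubeset L A)"
    unfolding bij_betw_def
  proof
    show "inj_on f (Pow {..<k})"
    proof (rule inj_onI)
      fix X Y assume XY: "X \<in> Pow {..<k}" "Y \<in> Pow {..<k}" "f X = f Y"
      have "g ` X \<subseteq> A" "g ` Y \<subseteq> A" using XY gim by auto
      then have "g ` X = g ` Y" using XY(3) LA unfolding f_def by blast
      then show "X = Y" using XY injg by (simp add: inj_on_image_eq_iff)
    qed
    show "f ` Pow {..<k} = cubeset L A"
    proof
      show "f ` Pow {..<k} \<subseteq> cubeset L A" unfolding f_def cubeset_def using gim by blast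
      show "cubeset L A \<subseteq> f ` Pow {..<k}"
      proof
        fix S assume "S \<in> cubeset L A"
        then obtain B where B: "B \<subseteq> A" "S = L \<union> B" unfolding cubeset_def by blast
        define X where "X = {i\<in>{..<k}. g i \<in> B}"
        have "g ` X = B" unfolding X_def using B gim by blast
        then have "f X = S" unfolding f_def using B by simp
        moreover have "X \<in> Pow {..<k}" unfolding X_def by blast
        ultimately show "S \<in> f ` Pow {..<k}" by blast
      qed
    qed
  qed
  have adj: "hypercube_adj (f X) (f Y) \<longleftrightarrow> hypercube_adj X Y"
    if XY: "X \<in> Pow {..<k}" "Y \<in> Pow {..<k}" for X Y
  proof -
    have "g ` X \<subseteq> A" "g ` Y \<subseteq> A" using XY gim by auto
    then have d1: "f X - f Y = g ` X - g ` Y" and d2: "f Y - f X = g ` Y - g ` X"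
      unfolding f_def using LA by blast+
    have d3: "g ` X - g ` Y = g ` (X - Y)" "g ` Y - g ` X = g ` (Y - X)"
      using inj_on_image_set_diff[of g "{..<k}" X Y] inj_on_image_set_diff[of g "{..<k}" Y X] XY injg
      by auto
    have "(f X - f Y) \<union> (f Y - f X) = g ` ((X - Y) \<union> (Y - X))"
      unfolding d1 d2 d3 image_Un ..
    moreover have "card (g ` ((X - Y) \<union> (Y - X))) = card ((X - Y) \<union> (Y - X))"
      using XY injg by (intro card_image) (auto intro: inj_on_subset)
    ultimately show ?thesis unfolding hypercube_adj_def by simp
  qed
  show ?thesis unfolding induces_cube_def using sub bijf adj by blast
qed

lemma pair_from_cube:
  assumes "induces_cube V hypercube_adj k S"
  shows "\<exists>L A. S = cubeset L A \<and> L \<in> V \<and> A \<subseteq> Ms V L \<and> card A = k"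
proof -
  from assms obtain f where SV: "S \<subseteq> V" and bij: "bij_betw f (Pow {..<k}) S"
    and adj: "\<forall>A\<in>Pow {..<k}. \<forall>B\<in>Pow {..<k}. hypercube_adj (f A) (f B) \<longleftrightarrow> hypercube_adj A B"
    unfolding induces_cube_def by blast
  obtain d where injd: "inj_on d {..<k}" and fd: "\<And>X. X \<subseteq> {..<k} \<Longrightarrow> f X = sd (f {}) (d ` X)"
    using cube_shape[OF bij adj] by blast
  have Sim: "S = f ` Pow {..<k}" using bij by (simp add: bij_betw_imp_surj_on)
  define A where "A = d ` {..<k}"
  define L where "L = f {} - A"
  define C where "C = f {} \<inter> A"
  have key: "sd (f {}) (d ` X) = L \<union> sd C (d ` X)" if "X \<subseteq> {..<k}" for X
  proof -
    have "d ` X \<subseteq> A" using that unfolding A_def by blast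
    then show ?thesis unfolding L_def C_def sd_def by blast
  qed
  have "S = cubeset L A"
  proof
    show "S \<subseteq> cubeset L A"
    proof
      fix T assume "T \<in> S"
      then obtain X where X: "X \<subseteq> {..<k}" "T = f X" using Sim by blast
      then have "T = L \<union> sd C (d ` X)" using fd[OF X(1)] key[OF X(1)] by simp
      moreover have "sd C (d ` X) \<subseteq> A" using X unfolding C_def A_def sd_def by blast
      ultimately show "T \<in> cubeset L A" unfolding cubeset_def by blast
    qed
    show "cubeset L A \<subseteq> S"
    proof
      fix T assume "T \<in> cubeset L A"
      then obtain B where B: "B \<subseteq> A" "T = L \<union> B" unfolding cubeset_def by blast
      define X where "X = {i\<in>{..<k}. d i \<in> sd C B}"
      have "sd C B \<subseteq> A" using B unfolding C_def sd_def by blast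
      then have dX: "d ` X = sd C B" unfolding X_def A_def by blast
      have X: "X \<subseteq> {..<k}" unfolding X_def by blast
      have "f X = L \<union> sd C (sd C B)" using fd[OF X] key[OF X] dX by simp
      also have "sd C (sd C B) = B" by (metis sd_assoc sd_empty(2) sd_self)
      finally have "f X = T" using B by simp
      then show "T \<in> S" using Sim X by blast
    qed
  qed
  moreover have LV: "L \<in> V"
  proof -
    have "L \<in> cubeset L A" unfolding cubeset_def by blast
    then show ?thesis using SV \<open>S = cubeset L A\<close> by blast
  qed
  moreover have "A \<subseteq> Ms V L"
  proof
    fix a assume a: "a \<in> A"
    have "L \<union> {a} \<in> cubeset L A" unfolding cubeset_def using a by blast
    then have "insert a L \<in> V" using SV \<open>S = cubeset L A\<close> by auto
    moreover have "a \<notin> L" unfolding L_def using a by blast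
    ultimately show "a \<in> Ms V L" unfolding Ms_def by blast
  qed
  moreover have "card A = k" unfolding A_def using injd by (simp add: card_image)
  ultimately show ?thesis by blast
qed

lemma cube_count:
  assumes finV: "finite V" and finF: "\<forall>F\<in>V. finite F"
    and uc: "\<forall>F\<in>V. \<forall>G\<in>V. F \<union> G \<in> V"
  shows "card {S. induces_cube V hypercube_adj k S} = (\<Sum>L\<in>V. card (Ms V L) choose k)"
proof -
  define P where "P = (SIGMA L:V. {A. A \<subseteq> Ms V L \<and> card A = k})"
  have finU: "finite (\<Union>V)" using finV finF by blast
  have finM: "finite (Ms V L)" for L
  proof -
    have "Ms V L \<subseteq> \<Union>V" unfolding Ms_def by blast
    then show ?thesis using finU finite_subset by blast
  qed
  have eq: "{S. induces_cube V hypercube_adj k S} = (\<lambda>(L, A). cubeset L A) ` P"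
  proof
    show "{S. induces_cube V hypercube_adj k S} \<subseteq> (\<lambda>(L, A). cubeset L A) ` P"
    proof
      fix S assume "S \<in> {S. induces_cube V hypercube_adj k S}"
      then obtain L A where "S = cubeset L A" "L \<in> V" "A \<subseteq> Ms V L" "card A = k"
        using pair_from_cube by blast
      then show "S \<in> (\<lambda>(L, A). cubeset L A) ` P" unfolding P_def by force
    qed
    show "(\<lambda>(L, A). cubeset L A) ` P \<subseteq> {S. induces_cube V hypercube_adj k S}"
    proof
      fix S assume "S \<in> (\<lambda>(L, A). cubeset L A) ` P"
      then obtain x where x: "x \<in> P" "S = (\<lambda>(L, A). cubeset L A) x" by blast
      obtain L A where "x = (L, A)" by (cases x)
      then have "S = cubeset L A" "L \<in> V" "A \<subseteq> Ms V L" "card A = k"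
        using x unfolding P_def by auto
      moreover have "finite A" using \<open>A \<subseteq> Ms V L\<close> finM finite_subset by blast
      ultimately show "S \<in> {S. induces_cube V hypercube_adj k S}"
        using cube_from_pair[OF uc] by blast
    qed
  qed
  have inj: "inj_on (\<lambda>(L, A). cubeset L A) P"
  proof (rule inj_onI)
    fix x y assume "x \<in> P" "y \<in> P" "(\<lambda>(L, A). cubeset L A) x = (\<lambda>(L, A). cubeset L A) y"
    then show "x = y" unfolding P_def Ms_def using cubeset_inj
      by (smt (verit, best) SigmaE case_prod_conv disjoint_iff mem_Collect_eq subset_iff)
  qed
  have "card {S. induces_cube V hypercube_adj k S} = card P"
    using eq inj by (simp add: card_image)
  also have "card P = (\<Sum>L\<in>V. card {A. A \<subseteq> Ms V L \<and> card A = k})"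
    unfolding P_def using finV finM by (intro card_SigmaI) auto
  also have "\<dots> = (\<Sum>L\<in>V. card (Ms V L) choose k)"
    using finM by (simp add: n_subsets)
  finally show ?thesis .
qed

definition U :: "nat \<Rightarrow> nat set" where
  "U e = (if e = 2 then {1} else if odd e \<and> 3 \<le> e then {e - 1, e + 1} else {})"

lemma cover_iff: "xi_cover n i j \<longleftrightarrow> i \<in> {1..n} \<and> j \<in> {1..n} \<and> j \<in> U i"
proof
  assume c: "xi_cover n i j"
  then have ij: "i \<in> {1..n}" "j \<in> {1..n}" unfolding xi_cover_def by auto
  from c consider "i = 2 \<and> j = 1" | "i = 3 \<and> j = 2"
    | m where "3 \<le> m" "m \<le> n - 1" "odd m" "i = m" "j = m + 1"
    | m where "3 \<le> m" "m \<le> n - 1" "even m" "i = m + 1" "j = m"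
    unfolding xi_cover_def by blast
  then have "j \<in> U i"
  proof cases
    case 1 then show ?thesis by (simp add: U_def)
  next
    case 2 then show ?thesis by (simp add: U_def)
  next
    case (3 m) then show ?thesis by (simp add: U_def)
  next
    case (4 m) then show ?thesis by (simp add: U_def)
  qed
  with ij show "i \<in> {1..n} \<and> j \<in> {1..n} \<and> j \<in> U i" by blast
next
  assume a: "i \<in> {1..n} \<and> j \<in> {1..n} \<and> j \<in> U i"
  then have ij: "1 \<le> i" "i \<le> n" "1 \<le> j" "j \<le> n" "j \<in> U i" by auto
  show "xi_cover n i j"
  proof (cases "i = 2")
    case True
    then have "j = 1" using ij by (simp add: U_def)
    then show ?thesis using True ij unfolding xi_cover_def by auto
  next
    case False
    then have o: "odd i" "3 \<le> i" "j = i - 1 \<or> j = i + 1" using ij(5)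
      by (auto simp: U_def split: if_splits)
    from o(3) show ?thesis
    proof
      assume j: "j = i - 1"
      show ?thesis
      proof (cases "i = 3")
        case True then show ?thesis using j ij unfolding xi_cover_def by auto
      next
        case False
        then have "3 \<le> i - 1 \<and> i - 1 \<le> n - 1 \<and> even (i - 1) \<and> i = (i - 1) + 1 \<and> j = i - 1"
          using o j ij by auto
        then have "\<exists>m. 3 \<le> m \<and> m \<le> n - 1 \<and> ((odd m \<and> i = m \<and> j = m + 1) \<or> (even m \<and> i = m + 1 \<and> j = m))"
          by (intro exI[of _ "i - 1"]) auto
        then show ?thesis using ij unfolding xi_cover_def by simp
      qed
    next
      assume j: "j = i + 1"
      then have "3 \<le> i \<and> i \<le> n - 1 \<and> odd i \<and> i = i \<and> j = i + 1"
        using o ij by auto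
      then have "\<exists>m. 3 \<le> m \<and> m \<le> n - 1 \<and> ((odd m \<and> i = m \<and> j = m + 1) \<or> (even m \<and> i = m + 1 \<and> j = m))"
        by (intro exI[of _ "i"]) simp
      then show ?thesis using ij unfolding xi_cover_def by simp
    qed
  qed
qed

definition fil :: "nat \<Rightarrow> nat set set" where
  "fil n = {F. F \<subseteq> {1..n} \<and> (\<forall>e\<in>F. U e \<inter> {1..n} \<subseteq> F)}"

lemma filters_eq: "xi_filters n = fil n"
proof -
  have "(\<forall>i j. i \<in> F \<longrightarrow> j \<in> {1..n} \<longrightarrow> xi_le n i j \<longrightarrow> j \<in> F) \<longleftrightarrow> (\<forall>e\<in>F. U e \<inter> {1..n} \<subseteq> F)"
    if F: "F \<subseteq> {1..n}" for F
  proof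
    assume "\<forall>i j. i \<in> F \<longrightarrow> j \<in> {1..n} \<longrightarrow> xi_le n i j \<longrightarrow> j \<in> F"
    note h = this
    show "\<forall>e\<in>F. U e \<inter> {1..n} \<subseteq> F"
    proof (intro ballI subsetI)
      fix e x assume ex: "e \<in> F" "x \<in> U e \<inter> {1..n}"
      then have "xi_cover n e x" using F cover_iff by blast
      then have "xi_le n e x" unfolding xi_le_def by (rule r_into_rtranclp)
      then show "x \<in> F" using h ex by blast
    qed
  next
    assume cl: "\<forall>e\<in>F. U e \<inter> {1..n} \<subseteq> F"
    have "j \<in> F" if "xi_le n i j" "i \<in> F" for i j
      using that(1)[unfolded xi_le_def] that(2)
    proof (induction rule: rtranclp_induct)
      case base then show ?case by simp
    next
      case (step y z)
      then show ?case using cl cover_iff by blast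
    qed
    then show "\<forall>i j. i \<in> F \<longrightarrow> j \<in> {1..n} \<longrightarrow> xi_le n i j \<longrightarrow> j \<in> F" by blast
  qed
  then show ?thesis unfolding xi_filters_def fil_def by blast
qed

definition M :: "nat \<Rightarrow> nat set \<Rightarrow> nat set" where
  "M n L = {e\<in>{1..n}. e \<notin> L \<and> U e \<inter> {1..n} \<subseteq> L}"

lemma fil_insert: "L \<in> fil n \<Longrightarrow> insert a L \<in> fil n \<longleftrightarrow> a \<in> {1..n} \<and> U a \<inter> {1..n} \<subseteq> insert a L"
  unfolding fil_def by auto

lemma U_irrefl: "a \<notin> U a" unfolding U_def by auto

lemma Ms_eq: "L \<in> fil n \<Longrightarrow> {a. a \<notin> L \<and> insert a L \<in> fil n} = M n L"
  unfolding M_def using fil_insert U_irrefl by blast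

lemma fil_finite: "finite (fil n)"
  by (rule finite_subset[of _ "Pow {1..n}"]) (auto simp: fil_def)

lemma fil_sub: "F \<in> fil n \<Longrightarrow> F \<subseteq> {1..n}" unfolding fil_def by blast

lemma fil_union: "F \<in> fil n \<Longrightarrow> G \<in> fil n \<Longrightarrow> F \<union> G \<in> fil n"
  unfolding fil_def by blast

definition W :: "nat \<Rightarrow> 'a::comm_ring_1 \<Rightarrow> 'a" where
  "W n y = (\<Sum>F\<in>fil n. y ^ card (M n F))"

lemma U_bound: "x \<in> U e \<Longrightarrow> 1 \<le> x \<and> x \<le> e + 1 \<and> (x = e + 1 \<longrightarrow> odd e)"
  unfolding U_def by (auto split: if_splits)

lemma U_even: "even e \<Longrightarrow> 4 \<le> e \<Longrightarrow> U e = {}" unfolding U_def by auto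
lemma U_odd: "odd e \<Longrightarrow> 3 \<le> e \<Longrightarrow> U e = {e - 1, e + 1}" unfolding U_def by auto

lemma U_le: assumes "even m" "e \<le> m" "x \<in> U e" shows "x \<le> m"
proof -
  have "x \<le> e + 1" "x = e + 1 \<longrightarrow> odd e" using U_bound[OF assms(3)] by auto
  moreover have "e = m \<longrightarrow> even e" using assms by auto
  ultimately have "x \<noteq> e + 1 \<or> e \<noteq> m" by blast
  then show ?thesis using \<open>x \<le> e + 1\<close> \<open>e \<le> m\<close> by (elim disjE) linarith+
qed

lemma filD: "F \<in> fil n \<Longrightarrow> e \<in> F \<Longrightarrow> x \<in> U e \<Longrightarrow> x \<le> n \<Longrightarrow> x \<in> F"
  unfolding fil_def using U_bound by fastforce

lemma filB: "F \<in> fil n \<Longrightarrow> x \<in> F \<Longrightarrow> 1 \<le> x \<and> x \<le> n"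
  unfolding fil_def by auto

lemma filI: "F \<subseteq> {1..n} \<Longrightarrow> (\<And>e x. e \<in> F \<Longrightarrow> x \<in> U e \<Longrightarrow> x \<le> n \<Longrightarrow> x \<in> F) \<Longrightarrow> F \<in> fil n"
  unfolding fil_def by auto

lemma M_iff: "e \<in> M n L \<longleftrightarrow> 1 \<le> e \<and> e \<le> n \<and> e \<notin> L \<and> (\<forall>x\<in>U e. x \<le> n \<longrightarrow> x \<in> L)"
  unfolding M_def using U_bound by fastforce

lemma M_insert_top:
  assumes "F \<subseteq> {1..n-1}" "1 \<le> n"
  shows "M n (insert n F) = M (n-1) F"
proof (rule set_eqI)
  fix e
  have nF: "n \<notin> F" using assms by auto
  show "e \<in> M n (insert n F) \<longleftrightarrow> e \<in> M (n-1) F"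
    unfolding M_iff using nF assms(2) by (auto; force)
qed

lemma fil_insert_top_even:
  assumes "even n" "4 \<le> n"
  shows "{F\<in>fil n. n \<in> F} = insert n ` fil (n-1)"
proof
  show "{F\<in>fil n. n \<in> F} \<subseteq> insert n ` fil (n-1)"
  proof
    fix F assume F: "F \<in> {F\<in>fil n. n \<in> F}"
    then have Ff: "F \<in> fil n" "n \<in> F" by auto
    have "F - {n} \<in> fil (n-1)"
    proof (rule filI)
      show "F - {n} \<subseteq> {1..n-1}" using filB[OF Ff(1)] by fastforce
      fix e x assume "e \<in> F - {n}" "x \<in> U e" "x \<le> n - 1"
      then show "x \<in> F - {n}" using filD[OF Ff(1)] assms by auto
    qed
    moreover have "F = insert n (F - {n})" using Ff by auto
    ultimately show "F \<in> insert n ` fil (n-1)" by blast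
  qed
  show "insert n ` fil (n-1) \<subseteq> {F\<in>fil n. n \<in> F}"
  proof
    fix G assume "G \<in> insert n ` fil (n-1)"
    then obtain F where F: "F \<in> fil (n-1)" "G = insert n F" by blast
    have "U n = {}" using U_even assms by blast
    have "insert n F \<in> fil n"
    proof (rule filI)
      show "insert n F \<subseteq> {1..n}" using filB[OF F(1)] assms by fastforce
      fix e x assume ex: "e \<in> insert n F" "x \<in> U e" "x \<le> n"
      then have "e \<in> F" using \<open>U n = {}\<close> by auto
      then show "x \<in> insert n F"
        using filD[OF F(1) _ ex(2)] ex(3) by (cases "x = n") auto
    qed
    then show "G \<in> {F\<in>fil n. n \<in> F}" using F by auto
  qed
qed

lemma fil_out_even:
  assumes "even n" "4 \<le> n"
  shows "{F\<in>fil n. n \<notin> F} = fil (n-2)"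
proof
  have Un1: "n \<in> U (n - 1)" using U_odd[of "n-1"] assms by auto
  have ev: "even (n - 2)" using assms by auto
  show "{F\<in>fil n. n \<notin> F} \<subseteq> fil (n-2)"
  proof
    fix F assume F: "F \<in> {F\<in>fil n. n \<notin> F}"
    then have Ff: "F \<in> fil n" "n \<notin> F" by auto
    have "n - 1 \<notin> F" using filD[OF Ff(1) _ Un1] Ff(2) by auto
    have sub: "F \<subseteq> {1..n-2}"
    proof
      fix x assume "x \<in> F"
      then have "1 \<le> x" "x \<le> n" "x \<noteq> n" "x \<noteq> n - 1" using filB[OF Ff(1)] Ff(2) \<open>n - 1 \<notin> F\<close> by auto
      then show "x \<in> {1..n-2}" by auto
    qed
    show "F \<in> fil (n-2)"
    proof (rule filI[OF sub])
      fix e x assume "e \<in> F" "x \<in> U e" "x \<le> n - 2"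
      then show "x \<in> F" using filD[OF Ff(1)] by auto
    qed
  qed
  show "fil (n-2) \<subseteq> {F\<in>fil n. n \<notin> F}"
  proof
    fix F assume F: "F \<in> fil (n-2)"
    have "F \<in> fil n"
    proof (rule filI)
      show "F \<subseteq> {1..n}" using filB[OF F] by fastforce
      fix e x assume ex: "e \<in> F" "x \<in> U e" "x \<le> n"
      then have "e \<le> n - 2" using filB[OF F] by blast
      then have "x \<le> n - 2" using U_le[OF ev _ ex(2)] by blast
      then show "x \<in> F" using filD[OF F ex(1,2)] by blast
    qed
    moreover have "n \<notin> F" using filB[OF F] assms by fastforce
    ultimately show "F \<in> {F\<in>fil n. n \<notin> F}" by blast
  qed
qed

lemma M_out_even:
  assumes "even n" "4 \<le> n" "F \<in> fil (n-2)"
  shows "M n F = insert n (M (n-2) F)" "n \<notin> M (n-2) F"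
proof -
  have Un1: "n \<in> U (n - 1)" using U_odd[of "n-1"] assms by auto
  have Un: "U n = {}" using U_even assms by blast
  have ev: "even (n - 2)" using assms by auto
  have sub: "\<And>x. x \<in> F \<Longrightarrow> 1 \<le> x \<and> x \<le> n - 2" using filB[OF assms(3)] by blast
  show "n \<notin> M (n-2) F" unfolding M_iff using assms by auto
  show "M n F = insert n (M (n-2) F)"
  proof (rule set_eqI)
    fix e
    show "e \<in> M n F \<longleftrightarrow> e \<in> insert n (M (n-2) F)"
    proof (cases "e \<le> n - 2")
      case True
      have hx: "\<And>x. x \<in> U e \<Longrightarrow> x \<le> n - 2 \<and> x \<le> n"
        using U_le[OF ev True] by (meson diff_le_self le_trans)
      have "(\<forall>x\<in>U e. x \<le> n \<longrightarrow> x \<in> F) \<longleftrightarrow> (\<forall>x\<in>U e. x \<le> n - 2 \<longrightarrow> x \<in> F)"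
        using hx by blast
      then show ?thesis using True assms by (auto simp: M_iff)
    next
      case False
      then consider "e = n - 1" | "e = n" | "e > n" by linarith
      then show ?thesis
      proof cases
        case 1
        have "n \<notin> F" using sub assms by force
        then have "e \<notin> M n F" unfolding M_iff using 1 Un1 by auto
        moreover have "e \<notin> insert n (M (n-2) F)" using 1 assms by (auto simp: M_iff)
        ultimately show ?thesis by blast
      next
        case 2
        have "n \<notin> F" using sub assms by force
        then have "e \<in> M n F" unfolding M_iff using 2 Un assms by auto
        then show ?thesis using 2 by blast
      next
        case 3 then show ?thesis using assms by (auto simp: M_iff)
      qed
    qed
  qed
qed

lemma fil_out_odd:
  assumes "odd n" "5 \<le> n"
  shows "{F\<in>fil n. n \<notin> F} = fil (n-1)"
proof
  have ev: "even (n - 1)" using assms by auto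
  show "{F\<in>fil n. n \<notin> F} \<subseteq> fil (n-1)"
  proof
    fix F assume F: "F \<in> {F\<in>fil n. n \<notin> F}"
    then have Ff: "F \<in> fil n" "n \<notin> F" by auto
    have sub: "F \<subseteq> {1..n-1}"
    proof
      fix x assume "x \<in> F"
      then have "1 \<le> x" "x \<le> n" "x \<noteq> n" using filB[OF Ff(1)] Ff(2) by auto
      then show "x \<in> {1..n-1}" by auto
    qed
    show "F \<in> fil (n-1)"
    proof (rule filI[OF sub])
      fix e x assume "e \<in> F" "x \<in> U e" "x \<le> n - 1"
      then show "x \<in> F" using filD[OF Ff(1)] by auto
    qed
  qed
  show "fil (n-1) \<subseteq> {F\<in>fil n. n \<notin> F}"
  proof
    fix F assume F: "F \<in> fil (n-1)"
    have "F \<in> fil n"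
    proof (rule filI)
      show "F \<subseteq> {1..n}" using filB[OF F] by fastforce
      fix e x assume ex: "e \<in> F" "x \<in> U e" "x \<le> n"
      then have "e \<le> n - 1" using filB[OF F] by blast
      then have "x \<le> n - 1" using U_le[OF ev _ ex(2)] by blast
      then show "x \<in> F" using filD[OF F ex(1,2)] by blast
    qed
    moreover have "n \<notin> F" using filB[OF F] assms by fastforce
    ultimately show "F \<in> {F\<in>fil n. n \<notin> F}" by blast
  qed
qed

lemma M_out_odd:
  assumes "odd n" "5 \<le> n" "F \<in> fil (n-1)"
  shows "M n F = (if n - 1 \<in> F then insert n (M (n-1) F) else M (n-1) F)" "n \<notin> M (n-1) F"
proof -
  have ev: "even (n - 1)" using assms by auto
  have Un: "U n = {n - 1, n + 1}" using U_odd[of n] assms by auto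
  have sub: "\<And>x. x \<in> F \<Longrightarrow> 1 \<le> x \<and> x \<le> n - 1" using filB[OF assms(3)] by blast
  show "n \<notin> M (n-1) F" unfolding M_iff using assms by auto
  show "M n F = (if n - 1 \<in> F then insert n (M (n-1) F) else M (n-1) F)"
  proof (rule set_eqI)
    fix e
    show "e \<in> M n F \<longleftrightarrow> e \<in> (if n - 1 \<in> F then insert n (M (n-1) F) else M (n-1) F)"
    proof (cases "e \<le> n - 1")
      case True
      have hx: "\<And>x. x \<in> U e \<Longrightarrow> x \<le> n - 1 \<and> x \<le> n"
        using U_le[OF ev True] by (meson diff_le_self le_trans)
      have "(\<forall>x\<in>U e. x \<le> n \<longrightarrow> x \<in> F) \<longleftrightarrow> (\<forall>x\<in>U e. x \<le> n - 1 \<longrightarrow> x \<in> F)"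
        using hx by blast
      then show ?thesis using True assms by (auto simp: M_iff)
    next
      case False
      then consider "e = n" | "e > n" by linarith
      then show ?thesis
      proof cases
        case 1
        have "n \<notin> F" using sub assms by force
        then have "e \<in> M n F \<longleftrightarrow> n - 1 \<in> F" unfolding M_iff using 1 Un assms by auto
        moreover have "e \<notin> M (n-1) F" unfolding M_iff using 1 assms by auto
        ultimately show ?thesis using 1 by auto
      next
        case 2 then show ?thesis using assms by (auto simp: M_iff)
      qed
    qed
  qed
qed

lemma fil_in_odd:
  assumes "odd n" "5 \<le> n"
  shows "{F\<in>fil n. n \<in> F} = insert n ` {F\<in>fil (n-1). n - 1 \<in> F}"
proof
  have ev: "even (n - 1)" using assms by auto
  have Un: "U n = {n - 1, n + 1}" using U_odd[of n] assms by auto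
  show "{F\<in>fil n. n \<in> F} \<subseteq> insert n ` {F\<in>fil (n-1). n - 1 \<in> F}"
  proof
    fix F assume F: "F \<in> {F\<in>fil n. n \<in> F}"
    then have Ff: "F \<in> fil n" "n \<in> F" by auto
    have n1: "n - 1 \<in> F" using filD[OF Ff(1) Ff(2)] Un by auto
    have "F - {n} \<in> fil (n-1)"
    proof (rule filI)
      show "F - {n} \<subseteq> {1..n-1}" using filB[OF Ff(1)] by fastforce
      fix e x assume "e \<in> F - {n}" "x \<in> U e" "x \<le> n - 1"
      then show "x \<in> F - {n}" using filD[OF Ff(1)] assms by auto
    qed
    moreover have "F = insert n (F - {n})" using Ff by auto
    moreover have "n - 1 \<in> F - {n}" using n1 assms by auto
    ultimately show "F \<in> insert n ` {F\<in>fil (n-1). n - 1 \<in> F}" by blast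
  qed
  show "insert n ` {F\<in>fil (n-1). n - 1 \<in> F} \<subseteq> {F\<in>fil n. n \<in> F}"
  proof
    fix G assume "G \<in> insert n ` {F\<in>fil (n-1). n - 1 \<in> F}"
    then obtain F where F: "F \<in> fil (n-1)" "n - 1 \<in> F" "G = insert n F" by blast
    have "insert n F \<in> fil n"
    proof (rule filI)
      show "insert n F \<subseteq> {1..n}" using filB[OF F(1)] assms by fastforce
      fix e x assume ex: "e \<in> insert n F" "x \<in> U e" "x \<le> n"
      show "x \<in> insert n F"
      proof (cases "e = n")
        case True
        then show ?thesis using ex Un F(2) by auto
      next
        case False
        then have "e \<in> F" using ex by auto
        then have "e \<le> n - 1" using filB[OF F(1)] by blast
        then have "x \<le> n - 1" using U_le[OF ev _ ex(2)] by blast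
        then show ?thesis using filD[OF F(1) \<open>e \<in> F\<close> ex(2)] by blast
      qed
    qed
    then show "G \<in> {F\<in>fil n. n \<in> F}" using F by auto
  qed
qed

lemma sum_split_P: "finite S \<Longrightarrow> sum g S = sum g {x\<in>S. P x} + sum g {x\<in>S. \<not> P x}"
proof -
  assume "finite S"
  moreover have "S = {x\<in>S. P x} \<union> {x\<in>S. \<not> P x}" by blast
  ultimately show ?thesis
    by (metis (no_types, lifting) sum.union_disjoint disjoint_iff finite_Un mem_Collect_eq)
qed

lemma M_finite: "finite (M n F)" unfolding M_def by simp

lemma A_even:
  fixes y :: "'a::comm_ring_1"
  assumes "even n" "4 \<le> n"
  shows "(\<Sum>F\<in>{F\<in>fil n. n \<in> F}. y ^ card (M n F)) = W (n-1) y"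
proof -
  have inj: "inj_on (insert n) (fil (n-1))"
  proof (rule inj_onI)
    fix F G assume "F \<in> fil (n-1)" "G \<in> fil (n-1)" "insert n F = insert n G"
    moreover have "n \<notin> F" "n \<notin> G" using calculation(1,2) fil_sub assms by fastforce+
    ultimately show "F = G" by (metis insert_ident)
  qed
  have "(\<Sum>F\<in>{F\<in>fil n. n \<in> F}. y ^ card (M n F)) = (\<Sum>F\<in>fil (n-1). y ^ card (M n (insert n F)))"
    unfolding fil_insert_top_even[OF assms] using inj by (simp add: sum.reindex)
  also have "\<dots> = W (n-1) y" unfolding W_def
    by (intro sum.cong refl) (use M_insert_top fil_sub assms in auto)
  finally show ?thesis .
qed

lemma B_even:
  fixes y :: "'a::comm_ring_1"
  assumes "even n" "4 \<le> n"
  shows "(\<Sum>F\<in>{F\<in>fil n. n \<notin> F}. y ^ card (M n F)) = y * W (n-2) y"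
proof -
  have "(\<Sum>F\<in>{F\<in>fil n. n \<notin> F}. y ^ card (M n F)) = (\<Sum>F\<in>fil (n-2). y * y ^ card (M (n-2) F))"
    unfolding fil_out_even[OF assms]
    by (intro sum.cong refl) (simp add: M_out_even[OF assms] M_finite)
  also have "\<dots> = y * W (n-2) y" unfolding W_def by (simp add: sum_distrib_left)
  finally show ?thesis .
qed

lemma W_even:
  fixes y :: "'a::comm_ring_1"
  assumes "even n" "4 \<le> n"
  shows "W n y = W (n-1) y + y * W (n-2) y"
proof -
  have "W n y = (\<Sum>F\<in>{F\<in>fil n. n \<in> F}. y ^ card (M n F)) + (\<Sum>F\<in>{F\<in>fil n. n \<notin> F}. y ^ card (M n F))"
    unfolding W_def by (rule sum_split_P[OF fil_finite])
  also have "\<dots> = W (n-1) y + y * W (n-2) y"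
    by (simp only: A_even[OF assms] B_even[OF assms])
  finally show ?thesis .
qed

lemma W_odd:
  fixes y :: "'a::comm_ring_1"
  assumes "odd n" "5 \<le> n"
  shows "W n y = W (n-1) y + y * W (n-2) y"
proof -
  have e: "even (n-1)" "4 \<le> n - 1" using assms by auto
  have nn: "n - 1 - 1 = n - 2" "n - 1 - 2 = n - 3" by auto
  have inj: "inj_on (insert n) {F\<in>fil (n-1). n - 1 \<in> F}"
  proof (rule inj_onI)
    fix F G assume "F \<in> {F\<in>fil (n-1). n - 1 \<in> F}" "G \<in> {F\<in>fil (n-1). n - 1 \<in> F}" "insert n F = insert n G"
    moreover have "n \<notin> F" "n \<notin> G" using calculation(1,2) fil_sub assms by fastforce+
    ultimately show "F = G" by (metis insert_ident)
  qed
  have S1: "(\<Sum>F\<in>{F\<in>fil n. n \<in> F}. y ^ card (M n F)) = W (n-2) y"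
  proof -
    have "(\<Sum>F\<in>{F\<in>fil n. n \<in> F}. y ^ card (M n F))
        = (\<Sum>F\<in>{F\<in>fil (n-1). n - 1 \<in> F}. y ^ card (M n (insert n F)))"
      unfolding fil_in_odd[OF assms] using inj by (simp add: sum.reindex)
    also have "\<dots> = (\<Sum>F\<in>{F\<in>fil (n-1). n - 1 \<in> F}. y ^ card (M (n-1) F))"
      by (intro sum.cong refl) (use M_insert_top fil_sub assms in auto)
    also have "\<dots> = W (n-2) y" using A_even[OF e] nn by simp
    finally show ?thesis .
  qed
  have S2: "(\<Sum>F\<in>{F\<in>fil n. n \<notin> F}. y ^ card (M n F)) = y * W (n-2) y + y * W (n-3) y"
  proof -
    have "(\<Sum>F\<in>{F\<in>fil n. n \<notin> F}. y ^ card (M n F))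
        = (\<Sum>F\<in>fil (n-1). (if n - 1 \<in> F then y * y ^ card (M (n-1) F) else y ^ card (M (n-1) F)))"
      unfolding fil_out_odd[OF assms]
    proof (intro sum.cong refl)
      fix F assume F: "F \<in> fil (n-1)"
      show "y ^ card (M n F) = (if n - 1 \<in> F then y * y ^ card (M (n-1) F) else y ^ card (M (n-1) F))"
        using M_out_odd[OF assms F] M_finite[of "n-1" F] by simp
    qed
    also have "\<dots> = (\<Sum>F\<in>{F\<in>fil (n-1). n - 1 \<in> F}. (if n - 1 \<in> F then y * y ^ card (M (n-1) F) else y ^ card (M (n-1) F)))
                  + (\<Sum>F\<in>{F\<in>fil (n-1). n - 1 \<notin> F}. (if n - 1 \<in> F then y * y ^ card (M (n-1) F) else y ^ card (M (n-1) F)))"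
      by (rule sum_split_P[OF fil_finite])
    also have "\<dots> = (\<Sum>F\<in>{F\<in>fil (n-1). n - 1 \<in> F}. y * y ^ card (M (n-1) F))
                  + (\<Sum>F\<in>{F\<in>fil (n-1). n - 1 \<notin> F}. y ^ card (M (n-1) F))"
      by (intro arg_cong2[where f="(+)"] sum.cong) auto
    also have "\<dots> = y * (\<Sum>F\<in>{F\<in>fil (n-1). n - 1 \<in> F}. y ^ card (M (n-1) F))
                  + (\<Sum>F\<in>{F\<in>fil (n-1). n - 1 \<notin> F}. y ^ card (M (n-1) F))"
      by (simp add: sum_distrib_left)
    also have "\<dots> = y * W (n-1-1) y + y * W (n-1-2) y"
      by (simp only: A_even[OF e] B_even[OF e])
    also have "\<dots> = y * W (n-2) y + y * W (n-3) y"
      by (simp only: nn)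
    finally show ?thesis .
  qed
  have "W n y = (\<Sum>F\<in>{F\<in>fil n. n \<in> F}. y ^ card (M n F)) + (\<Sum>F\<in>{F\<in>fil n. n \<notin> F}. y ^ card (M n F))"
    unfolding W_def by (rule sum_split_P[OF fil_finite])
  also have "\<dots> = W (n-2) y + (y * W (n-2) y + y * W (n-3) y)"
    by (simp only: S1 S2)
  finally have "W n y = W (n-2) y + (y * W (n-2) y + y * W (n-3) y)" .
  moreover have "W (n-1) y = W (n-2) y + y * W (n-3) y"
    using W_even[OF e] nn by simp
  ultimately show ?thesis by (simp add: algebra_simps)
qed

lemma W_rec:
  fixes y :: "'a::comm_ring_1"
  assumes "4 \<le> n"
  shows "W n y = W (n-1) y + y * W (n-2) y"
proof (cases "even n")
  case True then show ?thesis using W_even assms by blast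
next
  case False
  then have "5 \<le> n" using assms by presburger
  then show ?thesis using W_odd False by blast
qed

lemma fil2: "fil 2 = {{}, {1}, {1,2}}"
proof (rule set_eqI)
  fix F :: "nat set"
  show "F \<in> fil 2 \<longleftrightarrow> F \<in> {{}, {1}, {1,2}}"
  proof
    assume F: "F \<in> fil 2"
    have sub: "F \<subseteq> {1,2}" using filB[OF F] by fastforce
    have c: "2 \<in> F \<Longrightarrow> 1 \<in> F" using filD[OF F, of 2 1] by (simp add: U_def)
    show "F \<in> {{}, {1}, {1,2}}"
    proof (cases "1 \<in> F")
      case True
      then show ?thesis using sub by (cases "2 \<in> F") auto
    next
      case False
      then show ?thesis using sub c by auto
    qed
  next
    assume "F \<in> {{}, {1}, {1,2}}"
    then show "F \<in> fil 2"
      by (auto intro!: filI simp: U_def split: if_splits)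
  qed
qed

lemma fil3: "fil 3 = {{}, {1}, {1,2}, {1,2,3}}"
proof (rule set_eqI)
  fix F :: "nat set"
  show "F \<in> fil 3 \<longleftrightarrow> F \<in> {{}, {1}, {1,2}, {1,2,3}}"
  proof
    assume F: "F \<in> fil 3"
    have sub: "F \<subseteq> {1,2,3}" using filB[OF F] by fastforce
    have c: "2 \<in> F \<Longrightarrow> 1 \<in> F" using filD[OF F, of 2 1] by (simp add: U_def)
    have c2: "3 \<in> F \<Longrightarrow> 2 \<in> F" using filD[OF F, of 3 2] by (simp add: U_def)
    show "F \<in> {{}, {1}, {1,2}, {1,2,3}}"
    proof (cases "1 \<in> F")
      case True
      then show ?thesis using sub c2 by (cases "2 \<in> F"; cases "3 \<in> F") auto
    next
      case False
      then show ?thesis using sub c c2 by auto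
    qed
  next
    assume "F \<in> {{}, {1}, {1,2}, {1,2,3}}"
    then show "F \<in> fil 3"
      by (auto intro!: filI simp: U_def split: if_splits)
  qed
qed

lemma U123: "U 1 = {}" "U (Suc 0) = {}" "U 2 = {1}" "U 3 = {2, 4}" by (simp_all add: U_def)

lemma M2_iff: "e \<in> M 2 L \<longleftrightarrow> (e = 1 \<and> 1 \<notin> L) \<or> (e = 2 \<and> 2 \<notin> L \<and> 1 \<in> L)"
proof -
  have "e \<in> M 2 L \<longleftrightarrow> (e = 1 \<or> e = 2) \<and> e \<in> M 2 L" unfolding M_iff by auto
  also have "\<dots> \<longleftrightarrow> (e = 1 \<and> 1 \<notin> L) \<or> (e = 2 \<and> 2 \<notin> L \<and> 1 \<in> L)"
    by (rule iffI; elim conjE disjE) (simp_all add: M_iff U123)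
  finally show ?thesis .
qed

lemma M3_iff: "e \<in> M 3 L \<longleftrightarrow> (e = 1 \<and> 1 \<notin> L) \<or> (e = 2 \<and> 2 \<notin> L \<and> 1 \<in> L) \<or> (e = 3 \<and> 3 \<notin> L \<and> 2 \<in> L)"
proof -
  have "e \<in> M 3 L \<longleftrightarrow> (e = 1 \<or> e = 2 \<or> e = 3) \<and> e \<in> M 3 L" unfolding M_iff by auto
  also have "\<dots> \<longleftrightarrow> (e = 1 \<and> 1 \<notin> L) \<or> (e = 2 \<and> 2 \<notin> L \<and> 1 \<in> L) \<or> (e = 3 \<and> 3 \<notin> L \<and> 2 \<in> L)"
    by (rule iffI; elim conjE disjE) (simp_all add: M_iff U123)
  finally show ?thesis .
qed

lemma W2: "W 2 y = 1 + 2 * y"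
proof -
  have "M 2 {} = {1}" "M 2 {1} = {2}" "M 2 {1,2} = {}"
    by (auto simp: M2_iff)
  moreover have "{1} \<noteq> ({1,2}::nat set)" "{} \<noteq> ({1,2}::nat set)" "{} \<noteq> ({1}::nat set)" by auto
  ultimately show ?thesis unfolding W_def fil2 by simp
qed

lemma W3: "W 3 y = 1 + 3 * y"
proof -
  have "M 3 {} = {1}" "M 3 {1} = {2}" "M 3 {1,2} = {3}" "M 3 {1,2,3} = {}"
    by (auto simp: M3_iff)
  moreover have "{1,2} \<noteq> ({1,2,3}::nat set)" "{1} \<noteq> ({1,2,3}::nat set)" "{} \<noteq> ({1,2,3}::nat set)"
     "{1} \<noteq> ({1,2}::nat set)" "{} \<noteq> ({1,2}::nat set)" "{} \<noteq> ({1}::nat set)" by auto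
  ultimately show ?thesis unfolding W_def fil3 by simp
qed

fun Lp :: "nat \<Rightarrow> complex poly" where
  "Lp 0 = [:2:]"
| "Lp (Suc 0) = [:1:]"
| "Lp (Suc (Suc n)) = Lp (Suc n) + [:1, 1:] * Lp n"

lemma Lp_rec: "2 \<le> n \<Longrightarrow> Lp n = Lp (n-1) + [:1, 1:] * Lp (n-2)"
  by (cases n rule: Lp.cases) auto

lemma W_Lp: "2 \<le> n \<Longrightarrow> W n (1 + z) = poly (Lp n) z"
proof (induction n rule: less_induct)
  case (less n)
  consider "n = 2" | "n = 3" | "4 \<le> n" using less.prems by linarith
  then show ?case
  proof cases
    case 1
    then show ?thesis using W2[of "1 + z"] by (simp add: numeral_2_eq_2 algebra_simps)
  next
    case 2
    then show ?thesis using W3[of "1 + z"] by (simp add: numeral_3_eq_3 algebra_simps)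
  next
    case 3
    have "W n (1 + z) = W (n-1) (1 + z) + (1 + z) * W (n-2) (1 + z)" using W_rec 3 by blast
    also have "\<dots> = poly (Lp (n-1)) z + (1 + z) * poly (Lp (n-2)) z"
      using less.IH[of "n-1"] less.IH[of "n-2"] 3 by simp
    also have "\<dots> = poly (Lp n) z" using Lp_rec[of n] 3 by (simp add: algebra_simps)
    finally show ?thesis .
  qed
qed

lemma Lp_degree: "degree (Lp n) \<le> n div 2"
proof (induction n rule: Lp.induct)
  case 1 then show ?case by simp
next
  case 2 then show ?case by simp
next
  case (3 n)
  have "degree ([:1, 1:] * Lp n) \<le> degree [:1::complex, 1:] + degree (Lp n)"
    using degree_mult_le by blast
  moreover have "degree [:1::complex, 1:] = 1" by simp
  ultimately have "degree ([:1, 1:] * Lp n) \<le> 1 + degree (Lp n)" by simp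
  then have "degree ([:1, 1:] * Lp n) \<le> Suc (Suc n) div 2" using 3 by simp
  moreover have "degree (Lp (Suc n)) \<le> Suc (Suc n) div 2" using 3 by simp
  ultimately show ?case by (simp add: degree_add_le)
qed

lemma Lp_m1: "1 \<le> n \<Longrightarrow> poly (Lp n) (-1) = 1"
proof (induction n rule: Lp.induct)
  case 1 then show ?case by simp
next
  case 2 then show ?case by simp
next
  case (3 n) then show ?case by simp
qed

lemma Lp_nz: "1 \<le> n \<Longrightarrow> Lp n \<noteq> 0"
  using Lp_m1 by force

lemma q_eq: "q n k = (\<Sum>L\<in>fil n. card (M n L) choose k)"
proof -
  have "q n k = card {S. induces_cube (fil n) hypercube_adj k S}"
    unfolding q_def filters_eq omega_hyp ..
  also have "\<dots> = (\<Sum>L\<in>fil n. card (Ms (fil n) L) choose k)"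
  proof (rule cube_count)
    show "finite (fil n)" by (rule fil_finite)
    show "\<forall>F\<in>fil n. finite F" using fil_sub finite_subset by blast
    show "\<forall>F\<in>fil n. \<forall>G\<in>fil n. F \<union> G \<in> fil n" using fil_union by blast
  qed
  also have "\<dots> = (\<Sum>L\<in>fil n. card (M n L) choose k)"
    by (intro sum.cong refl) (simp add: Ms_def Ms_eq)
  finally show ?thesis .
qed

lemma M_card_le: "card (M n L) \<le> n"
proof -
  have "M n L \<subseteq> {1..n}" unfolding M_def by blast
  then have "card (M n L) \<le> card {1..n}" by (intro card_mono) auto
  then show ?thesis by simp
qed

lemma binom_ext:
  fixes z :: complex
  assumes "m \<le> n"
  shows "(\<Sum>k\<le>n. of_nat (m choose k) * z ^ k) = (1 + z) ^ m"
proof -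
  have "(\<Sum>k\<le>n. of_nat (m choose k) * z ^ k) = (\<Sum>k\<le>m. of_nat (m choose k) * z ^ k)"
    using assms by (intro sum.mono_neutral_right) auto
  also have "\<dots> = (z + 1) ^ m" by (simp add: binomial_ring)
  finally show ?thesis by (simp add: add.commute)
qed

lemma poly_cube: "poly (cube_poly n) (z::complex) = W n (1 + z)"
proof -
  have "poly (cube_poly n) z = (\<Sum>k\<le>n. of_nat (q n k) * z ^ k)"
    unfolding cube_poly_def by (simp add: poly_sum poly_monom)
  also have "\<dots> = (\<Sum>k\<le>n. \<Sum>L\<in>fil n. of_nat (card (M n L) choose k) * z ^ k)"
    unfolding q_eq by (simp add: sum_distrib_right)
  also have "\<dots> = (\<Sum>L\<in>fil n. \<Sum>k\<le>n. of_nat (card (M n L) choose k) * z ^ k)"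
    by (rule sum.swap)
  also have "\<dots> = (\<Sum>L\<in>fil n. (1 + z) ^ card (M n L))"
    by (intro sum.cong refl binom_ext M_card_le)
  also have "\<dots> = W n (1 + z)" unfolding W_def ..
  finally show ?thesis .
qed

lemma cube_Lp: "2 \<le> n \<Longrightarrow> cube_poly n = Lp n"
proof -
  assume "2 \<le> n"
  then have "poly (cube_poly n) = poly (Lp n)"
    using poly_cube W_Lp by auto
  then show ?thesis by (simp add: poly_eq_poly_eq_iff)
qed

lemma trig_rec:
  fixes t :: real
  assumes c: "cos t \<noteq> 0"
  shows "2 * cos (real (Suc (Suc m)) * t) / (2 * cos t) ^ Suc (Suc m)
       = 2 * cos (real (Suc m) * t) / (2 * cos t) ^ Suc m
         + (1 + (- (5 + (tan t)\<^sup>2) / 4)) * (2 * cos (real m * t) / (2 * cos t) ^ m)"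
proof -
  define a where "a = real (Suc m) * t"
  have e1: "real (Suc (Suc m)) * t = a + t" unfolding a_def by (simp add: algebra_simps)
  have e0: "real m * t = a - t" unfolding a_def by (simp add: algebra_simps)
  have ch: "cos (a + t) = 2 * cos t * cos a - cos (a - t)"
    by (simp add: cos_add cos_diff)
  have tt: "1 + (- (5 + (tan t)\<^sup>2) / 4) = - 1 / (4 * (cos t)\<^sup>2)"
  proof -
    have "(tan t)\<^sup>2 = (sin t)\<^sup>2 / (cos t)\<^sup>2" by (simp add: tan_def power_divide)
    also have "\<dots> = (1 - (cos t)\<^sup>2) / (cos t)\<^sup>2" by (simp add: sin_squared_eq)
    finally have "(tan t)\<^sup>2 = (1 - (cos t)\<^sup>2) / (cos t)\<^sup>2" .
    then show ?thesis using c by (simp add: field_simps)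
  qed
  show ?thesis unfolding e1 e0[symmetric] tt unfolding a_def[symmetric] e0 ch
    using c by (simp add: field_simps power2_eq_square)
qed

lemma Lp_trig:
  fixes t :: real
  assumes c: "cos t \<noteq> 0"
  shows "poly (Lp m) (complex_of_real (- (5 + (tan t)\<^sup>2) / 4)) = complex_of_real (2 * cos (real m * t) / (2 * cos t) ^ m)"
proof (induction m rule: Lp.induct)
  case 1 then show ?case by simp
next
  case 2 then show ?case using c by simp
next
  case (3 m)
  define r where "r = - (5 + (tan t)\<^sup>2) / 4"
  define A where "A = 2 * cos (real (Suc m) * t) / (2 * cos t) ^ Suc m"
  define B where "B = 2 * cos (real m * t) / (2 * cos t) ^ m"
  have IH1: "poly (Lp (Suc m)) (complex_of_real r) = complex_of_real A" using 3 unfolding r_def A_def by simp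
  have IH2: "poly (Lp m) (complex_of_real r) = complex_of_real B" using 3 unfolding r_def B_def by simp
  have "poly (Lp (Suc (Suc m))) (complex_of_real r)
      = poly (Lp (Suc m)) (complex_of_real r) + (1 + complex_of_real r) * poly (Lp m) (complex_of_real r)"
    by (simp add: algebra_simps)
  also have "\<dots> = complex_of_real A + (1 + complex_of_real r) * complex_of_real B"
    unfolding IH1 IH2 ..
  also have "\<dots> = complex_of_real (A + (1 + r) * B)" by simp
  also have "A + (1 + r) * B = 2 * cos (real (Suc (Suc m)) * t) / (2 * cos t) ^ Suc (Suc m)"
    unfolding A_def B_def r_def using trig_rec[OF c, of m] by simp
  finally show ?case unfolding r_def .
qed

theorem mainTheorem9:
  fixes n :: nat
  assumes "n \<ge> 2"
  shows "{z :: complex. poly (cube_poly n) z = 0} =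
         {complex_of_real (- (5 + (tan (real (2 * k - 1) * pi / real (2 * n)))\<^sup>2) / 4) | k.
            k \<in> {1..n div 2}}"
proof -
  define th where "th k = real (2 * k - 1) * pi / real (2 * n)" for k
  define zz where "zz k = complex_of_real (- (5 + (tan (th k))\<^sup>2) / 4)" for k
  have R: "{complex_of_real (- (5 + (tan (real (2 * k - 1) * pi / real (2 * n)))\<^sup>2) / 4) | k.
            k \<in> {1..n div 2}} = zz ` {1..n div 2}"
    unfolding zz_def th_def by blast
  have npos: "real n > 0" using assms by simp
  have thb: "0 < th k \<and> th k < pi / 2" if k: "k \<in> {1..n div 2}" for k
  proof -
    have k1: "1 \<le> k" "2 * k \<le> n" using k by auto
    have a: "real (2 * k - 1) \<ge> 1" using k1 by simp
    have b: "real (2 * k - 1) < real n" using k1 by simp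
    define c where "c = real (2 * k - 1) / real n"
    have t: "th k = c * (pi / 2)" unfolding th_def c_def by (simp add: field_simps)
    have c0: "0 < c" unfolding c_def using a npos by simp
    have c1: "c < 1" unfolding c_def using b npos by simp
    have "0 < c * (pi / 2)" using c0 pi_gt_zero by simp
    moreover have "c * (pi / 2) < 1 * (pi / 2)" using c1 pi_gt_zero by (intro mult_strict_right_mono) auto
    ultimately show ?thesis unfolding t by simp
  qed
  have cpos: "cos (th k) > 0" if "k \<in> {1..n div 2}" for k
    using thb[OF that] by (intro cos_gt_zero_pi) auto
  have croot: "cos (real n * th k) = 0" if k: "k \<in> {1..n div 2}" for k
  proof -
    have "real n * th k = of_int (int (2 * k - 1)) * (pi / 2)"
      unfolding th_def using npos by (simp add: field_simps)
    moreover have "odd (int (2 * k - 1))" using k by auto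
    ultimately show ?thesis unfolding cos_zero_iff_int by blast
  qed
  have Q: "cube_poly n = Lp n" using cube_Lp assms by blast
  have sub: "zz ` {1..n div 2} \<subseteq> {z::complex. poly (cube_poly n) z = 0}"
  proof
    fix w assume "w \<in> zz ` {1..n div 2}"
    then obtain k where k: "k \<in> {1..n div 2}" "w = zz k" by blast
    have "poly (cube_poly n) w = complex_of_real (2 * cos (real n * th k) / (2 * cos (th k)) ^ n)"
      unfolding Q k(2) zz_def using Lp_trig cpos[OF k(1)] by simp
    also have "\<dots> = 0" using croot[OF k(1)] by simp
    finally show "w \<in> {z. poly (cube_poly n) z = 0}" by simp
  qed
  have inj: "inj_on zz {1..n div 2}"
  proof (rule inj_onI)
    fix j k assume j: "j \<in> {1..n div 2}" and k: "k \<in> {1..n div 2}" and e: "zz j = zz k"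
    then have "- (5 + (tan (th j))\<^sup>2) / 4 = - (5 + (tan (th k))\<^sup>2) / 4"
      unfolding zz_def by (simp only: of_real_eq_iff)
    then have "(tan (th j))\<^sup>2 = (tan (th k))\<^sup>2" by simp
    moreover have "tan (th j) > 0" "tan (th k) > 0" using thb[OF j] thb[OF k] tan_gt_zero by auto
    ultimately have tjk: "tan (th j) = tan (th k)" by (simp add: power2_eq_iff)
    have "th j = th k"
    proof (rule ccontr)
      assume "th j \<noteq> th k"
      then consider "th j < th k" | "th k < th j" by linarith
      then show False
      proof cases
        case 1 then have "tan (th j) < tan (th k)" using thb[OF j] thb[OF k] by (intro tan_monotone) auto
        then show False using tjk by simp
      next
        case 2 then have "tan (th k) < tan (th j)" using thb[OF j] thb[OF k] by (intro tan_monotone) auto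
        then show False using tjk by simp
      qed
    qed
    then have "real (2 * j - 1) = real (2 * k - 1)" unfolding th_def using npos by (simp add: field_simps)
    then show "j = k" using j k by simp
  qed
  have nz: "Lp n \<noteq> 0" using Lp_nz assms by simp
  have fin: "finite {z::complex. poly (cube_poly n) z = 0}" using poly_roots_finite[OF nz] Q by simp
  have "card {z::complex. poly (cube_poly n) z = 0} \<le> degree (Lp n)" using card_poly_roots_bound[OF nz] Q by simp
  also have "\<dots> \<le> n div 2" by (rule Lp_degree)
  also have "\<dots> = card (zz ` {1..n div 2})" using inj by (simp add: card_image)
  finally have "card {z::complex. poly (cube_poly n) z = 0} \<le> card (zz ` {1..n div 2})" .
  moreover have "card (zz ` {1..n div 2}) \<le> card {z::complex. poly (cube_poly n) z = 0}"
    using sub fin by (rule card_mono[rotated])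
  ultimately have "zz ` {1..n div 2} = {z::complex. poly (cube_poly n) z = 0}"
    using card_subset_eq[OF fin sub] by linarith
  then show ?thesis unfolding R by simp
qed

end
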